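(* Suppose that $G \leq \mathrm{Homeo}^+(\mathbb{R})$ acts on $\mathbb{R}$ with no fixed points, and that $G^0 \neq 1$. Then the transitivity degree of $G$ is at most $2$.
   Context: $\mathrm{Homeo}^+(\mathbb{R})$ is the group of orientation-preserving homeomorphisms of $\mathbb{R}$, and $G^0$ is the subgroup of compactly supported elements of $G$. The transitivity degree of a group is the supremum of all $k$ such that it admits a faithful action on a set that is transitive on ordered $k$-tuples of distinct elements. *)

theory Defs
  imports "HOL-Analysis.Analysis"
begin

definition homeo_plus :: "(real \<Rightarrow> real) \<Rightarrow> bool" where
  "homeo_plus f \<longleftrightarrow> strict_mono f \<and> (\<exists>g. homeomorphism UNIV UNIV f g)"

definition subgroup_homeo_plus :: "(real \<Rightarrow> real) set \<Rightarrow> bool" where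
  "subgroup_homeo_plus G \<longleftrightarrow>
     (\<forall>g\<in>G. homeo_plus g) \<and> id \<in> G \<and>
     (\<forall>g\<in>G. \<forall>h\<in>G. g \<circ> h \<in> G) \<and> (\<forall>g\<in>G. inv g \<in> G)"

definition compactly_supported :: "(real \<Rightarrow> real) \<Rightarrow> bool" where
  "compactly_supported g \<longleftrightarrow> compact (closure {x. g x \<noteq> x})"

definition group_action_on ::
  "(real \<Rightarrow> real) set \<Rightarrow> 'x set \<Rightarrow> ((real \<Rightarrow> real) \<Rightarrow> 'x \<Rightarrow> 'x) \<Rightarrow> bool" where
  "group_action_on G X act \<longleftrightarrow>
     (\<forall>g\<in>G. \<forall>x\<in>X. act g x \<in> X) \<and>
     (\<forall>x\<in>X. act id x = x) \<and>
     (\<forall>g\<in>G. \<forall>h\<in>G. \<forall>x\<in>X. act (g \<circ> h) x = act g (act h x))"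

definition faithful_action ::
  "(real \<Rightarrow> real) set \<Rightarrow> 'x set \<Rightarrow> ((real \<Rightarrow> real) \<Rightarrow> 'x \<Rightarrow> 'x) \<Rightarrow> bool" where
  "faithful_action G X act \<longleftrightarrow>
     (\<forall>g\<in>G. (\<forall>x\<in>X. act g x = x) \<longrightarrow> g = id)"

text \<open>Transitive on ordered k-tuples of distinct elements (the set of such tuples
  must be nonempty, as transitive actions are on nonempty sets).\<close>
definition k_transitive ::
  "(real \<Rightarrow> real) set \<Rightarrow> 'x set \<Rightarrow> ((real \<Rightarrow> real) \<Rightarrow> 'x \<Rightarrow> 'x) \<Rightarrow> nat \<Rightarrow> bool" where
  "k_transitive G X act k \<longleftrightarrow>
     (\<exists>t. (\<forall>i<k. t i \<in> X) \<and> inj_on t {..<k}) \<and>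
     (\<forall>s t. (\<forall>i<k. s i \<in> X) \<and> inj_on s {..<k} \<and>
            (\<forall>i<k. t i \<in> X) \<and> inj_on t {..<k} \<longrightarrow>
            (\<exists>g\<in>G. \<forall>i<k. act g (s i) = t i))"

end

theory Submission
  imports Defs
begin

lemma hp_basic:
  assumes "homeo_plus g"
  shows "strict_mono g" "inj g" "surj g" "\<And>r. inv g (g r) = r" "\<And>r. g (inv g r) = r"
proof -
  from assms obtain g' where sm: "strict_mono g" and hm: "homeomorphism UNIV UNIV g g'"
    by (auto simp: homeo_plus_def)
  have 1: "\<And>x. g' (g x) = x" "\<And>y. g (g' y) = y" using hm by (auto simp: homeomorphism_def)
  show "strict_mono g" by fact
  show ij: "inj g" using sm strict_mono_imp_inj_on by blast
  show sj: "surj g" using 1 by (metis surjI)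
  show "\<And>r. inv g (g r) = r" using ij by simp
  show "\<And>r. g (inv g r) = r" using sj by (simp add: surj_f_inv_f)
qed

lemma comm_disj:
  fixes f g :: "real \<Rightarrow> real"
  assumes "inj f" "inj g" "\<And>r. f r \<noteq> r \<Longrightarrow> q < r" "\<And>r. g r \<noteq> r \<Longrightarrow> r < q"
  shows "f \<circ> g = g \<circ> f"
proof
  fix r
  show "(f \<circ> g) r = (g \<circ> f) r"
  proof (cases "f r = r")
    case False
    then have "q < r" using assms(3) by blast
    then have g1: "g r = r" using assms(4) by fastforce
    have "f (f r) \<noteq> f r" using False assms(1) by (metis injD)
    then have "q < f r" using assms(3) by blast
    then have "g (f r) = f r" using assms(4) by fastforce
    then show ?thesis using g1 by simp
  next
    case True
    show ?thesis
    proof (cases "g r = r")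
      case False
      have "g (g r) \<noteq> g r" using False assms(2) by (metis injD)
      then have "g r < q" using assms(4) by blast
      then have "f (g r) = g r" using assms(3) by fastforce
      then show ?thesis using True by simp
    qed (use True in simp)
  qed
qed

lemma cyc3:
  fixes P Q R :: "real set"
  assumes a1: "\<And>t. t \<in> P \<longleftrightarrow> f t \<in> Q" and a2: "\<And>t. t \<in> Q \<longleftrightarrow> f t \<in> R"
    and a3: "\<And>t. t \<in> R \<longleftrightarrow> f t \<in> P" and sj: "surj f" and ch: "P \<subseteq> Q \<or> Q \<subseteq> P"
  shows "P = Q"
proof -
  have sf: "\<And>q. \<exists>u. q = f u" using sj by (metis surjD)
  from ch show ?thesis
  proof
    assume PQ: "P \<subseteq> Q"
    have QR: "Q \<subseteq> R"
    proof
      fix q assume q: "q \<in> Q"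
      obtain u where u: "q = f u" using sf by blast
      have "u \<in> P" using a1[of u] q u by simp
      then have "u \<in> Q" using PQ by blast
      then show "q \<in> R" using a2[of u] u by simp
    qed
    have RP: "R \<subseteq> P"
    proof
      fix q assume q: "q \<in> R"
      obtain u where u: "q = f u" using sf by blast
      have "u \<in> Q" using a2[of u] q u by simp
      then have "u \<in> R" using QR by blast
      then show "q \<in> P" using a3[of u] u by simp
    qed
    have "Q \<subseteq> P" using QR RP by (rule subset_trans)
    with PQ show ?thesis by (rule equalityI)
  next
    assume QP: "Q \<subseteq> P"
    have RQ: "R \<subseteq> Q"
    proof
      fix q assume q: "q \<in> R"
      obtain u where u: "q = f u" using sf by blast
      have "u \<in> Q" using a2[of u] q u by simp
      then have "u \<in> P" using QP by blast
      then show "q \<in> Q" using a1[of u] u by simp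
    qed
    have PR: "P \<subseteq> R"
    proof
      fix q assume q: "q \<in> P"
      obtain u where u: "q = f u" using sf by blast
      have "u \<in> R" using a3[of u] q u by simp
      then have "u \<in> Q" using RQ by blast
      then show "q \<in> R" using a2[of u] u by simp
    qed
    have "P \<subseteq> Q" using PR RQ by (rule subset_trans)
    then show ?thesis using QP by (rule equalityI)
  qed
qed

lemma grp:
  assumes "subgroup_homeo_plus G"
  shows "\<And>g. g \<in> G \<Longrightarrow> homeo_plus g" "id \<in> G"
    "\<And>g h. g \<in> G \<Longrightarrow> h \<in> G \<Longrightarrow> g \<circ> h \<in> G" "\<And>g. g \<in> G \<Longrightarrow> inv g \<in> G"
  using assms by (auto simp: subgroup_homeo_plus_def)

lemma act_inv:
  assumes "subgroup_homeo_plus G" "group_action_on G X act" "h \<in> G" "x \<in> X"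
  shows "act (inv h) (act h x) = x"
proof -
  have "inv h \<circ> h = id" using hp_basic(4)[OF grp(1)[OF assms(1,3)]] by (simp add: fun_eq_iff)
  moreover have "act (inv h \<circ> h) x = act (inv h) (act h x)"
    using assms grp[OF assms(1)] by (simp add: group_action_on_def)
  ultimately show ?thesis using assms(2,4) by (simp add: group_action_on_def)
qed

lemma tuple_ext:
  fixes t0 :: "nat \<Rightarrow> 'x"
  assumes "\<forall>i<k. t0 i \<in> X" "inj_on t0 {..<k}" "3 \<le> k"
    "x \<in> X" "y \<in> X" "z \<in> X"
  shows "\<exists>w. (\<forall>i\<in>{3..<k}. w i \<in> X \<and> w i \<notin> {x,y,z}) \<and> inj_on w {3..<k}"
proof -
  define F where "F = t0 ` {..<k}"
  define F' where "F' = F - {x,y,z}"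
  have cF: "card F = k" using assms(2) by (simp add: F_def card_image)
  have "card F - card {x,y,z} \<le> card F'" unfolding F'_def by (rule diff_card_le_card_Diff) simp
  moreover have "card {x,y,z} \<le> 3" by (simp add: card_insert_if)
  ultimately have cF': "k - 3 \<le> card F'" using cF by linarith
  have fF': "finite F'" by (simp add: F'_def F_def)
  obtain e where e: "bij_betw e {0..<card F'} F'" using ex_bij_betw_nat_finite[OF fF'] by blast
  define w where "w i = e (i - 3)" for i
  have "\<forall>i\<in>{3..<k}. w i \<in> X \<and> w i \<notin> {x,y,z}"
  proof
    fix i assume i: "i \<in> {3..<k}"
    then have "i - 3 \<in> {0..<card F'}" using cF' by auto
    then have "w i \<in> F'" using e by (auto simp: w_def bij_betw_def)
    then show "w i \<in> X \<and> w i \<notin> {x,y,z}" using assms(1) by (auto simp: F'_def F_def)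
  qed
  moreover have "inj_on w {3..<k}"
  proof (rule inj_onI)
    fix i j assume i: "i \<in> {3..<k}" and j: "j \<in> {3..<k}" and eq: "w i = w j"
    have "i - 3 \<in> {0..<card F'}" "j - 3 \<in> {0..<card F'}" using i j cF' by auto
    then have "i - 3 = j - 3" using e eq by (auto simp: w_def bij_betw_def inj_on_def)
    then show "i = j" using i j by auto
  qed
  ultimately show ?thesis by blast
qed


lemma cyclic:
  assumes kt: "k_transitive G X act k" and k3: "3 \<le> k"
    and xyz: "x \<in> X" "y \<in> X" "z \<in> X" "x \<noteq> y" "y \<noteq> z" "x \<noteq> z"
  shows "\<exists>h\<in>G. act h x = y \<and> act h y = z \<and> act h z = x"
proof -
  obtain t0 where t0: "\<forall>i<k. t0 i \<in> X" "inj_on t0 {..<k}" using kt by (auto simp: k_transitive_def)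
  obtain w where w: "\<forall>i\<in>{3..<k}. w i \<in> X \<and> w i \<notin> {x,y,z}" "inj_on w {3..<k}"
    using tuple_ext[OF t0 k3 xyz(1-3)] by blast
  define s where "s i = (if i = 0 then x else if i = Suc 0 then y else if i = 2 then z else w i)" for i
  define t where "t i = (if i = 0 then y else if i = Suc 0 then z else if i = 2 then x else w i)" for i
  have sX: "\<forall>i<k. s i \<in> X" using w xyz by (auto simp: s_def)
  have tX: "\<forall>i<k. t i \<in> X" using w xyz by (auto simp: t_def)
  have sI: "inj_on s {..<k}"
  proof (rule inj_onI)
    fix i j assume i: "i \<in> {..<k}" and j: "j \<in> {..<k}" and eq: "s i = s j"
    have wi: "3 \<le> i \<Longrightarrow> w i \<notin> {x,y,z}" and wj: "3 \<le> j \<Longrightarrow> w j \<notin> {x,y,z}" using w i j by auto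
    show "i = j"
    proof (cases "3 \<le> i \<and> 3 \<le> j")
      case True
      then show ?thesis using eq w(2) i j by (auto simp: s_def inj_on_def)
    next
      case False
      then show ?thesis using eq wi wj xyz by (auto simp: s_def split: if_splits)
    qed
  qed
  have tI: "inj_on t {..<k}"
  proof (rule inj_onI)
    fix i j assume i: "i \<in> {..<k}" and j: "j \<in> {..<k}" and eq: "t i = t j"
    have wi: "3 \<le> i \<Longrightarrow> w i \<notin> {x,y,z}" and wj: "3 \<le> j \<Longrightarrow> w j \<notin> {x,y,z}" using w i j by auto
    show "i = j"
    proof (cases "3 \<le> i \<and> 3 \<le> j")
      case True
      then show ?thesis using eq w(2) i j by (auto simp: t_def inj_on_def)
    next
      case False
      then show ?thesis using eq wi wj xyz by (auto simp: t_def split: if_splits)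
    qed
  qed
  obtain h where h: "h \<in> G" "\<forall>i<k. act h (s i) = t i"
    using kt sX sI tX tI unfolding k_transitive_def by blast
  have "act h (s 0) = t 0" "act h (s 1) = t 1" "act h (s 2) = t 2" using h(2) k3 by auto
  then show ?thesis using h(1) by (auto simp: s_def t_def)
qed


theorem proposition5p2:
  fixes G :: "(real \<Rightarrow> real) set"
    and X :: "'x set" and act :: "(real \<Rightarrow> real) \<Rightarrow> 'x \<Rightarrow> 'x" and k :: nat
  assumes "subgroup_homeo_plus G"
    and "\<forall>x. \<exists>g\<in>G. g x \<noteq> x"
    and "\<exists>g\<in>G. g \<noteq> id \<and> compactly_supported g"
    and "group_action_on G X act"
    and "faithful_action G X act"
    and "k_transitive G X act k"
  shows "k \<le> 2"
proof (rule ccontr)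
  assume "\<not> k \<le> 2"
  then have k3: "3 \<le> k" by simp
  note sg = assms(1) and ga = assms(4)
  note G1 = grp(1)[OF sg] and Gid = grp(2)[OF sg] and Gc = grp(3)[OF sg] and Gi = grp(4)[OF sg]
  have aX: "\<And>g x. g \<in> G \<Longrightarrow> x \<in> X \<Longrightarrow> act g x \<in> X" using ga by (simp add: group_action_on_def)
  have aid: "\<And>x. x \<in> X \<Longrightarrow> act id x = x" using ga by (simp add: group_action_on_def)
  have ac: "\<And>g h x. g \<in> G \<Longrightarrow> h \<in> G \<Longrightarrow> x \<in> X \<Longrightarrow> act (g \<circ> h) x = act g (act h x)"
    using ga by (simp add: group_action_on_def)
  have ai: "\<And>h x. h \<in> G \<Longrightarrow> x \<in> X \<Longrightarrow> act (inv h) (act h x) = x"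
    using act_inv[OF sg ga] by blast
  have faith: "\<And>g. g \<in> G \<Longrightarrow> (\<forall>x\<in>X. act g x = x) \<Longrightarrow> g = id"
    using assms(5) by (simp add: faithful_action_def)
  obtain t0 where t0: "\<forall>i<k. t0 i \<in> X" "inj_on t0 {..<k}"
    using assms(6) by (auto simp: k_transitive_def)
  define x0 where "x0 = t0 0"
  define y0 where "y0 = t0 1"
  have x0y0: "x0 \<in> X" "y0 \<in> X" "x0 \<noteq> y0"
    using t0(1) k3 inj_onD[OF t0(2), of 0 1] by (auto simp: x0_def y0_def)
  define S where "S a p t \<longleftrightarrow> (\<forall>r. a r \<noteq> r \<longrightarrow> p < r \<and> r < t)" for a :: "real \<Rightarrow> real" and p t
  define A where "A x y = {t. \<exists>a\<in>G. (\<exists>p. S a p t) \<and> act a x = y}" for x y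
  have upA: "\<And>x y t t'. t \<in> A x y \<Longrightarrow> t \<le> t' \<Longrightarrow> t' \<in> A x y"
    unfolding A_def S_def by (smt (verit) mem_Collect_eq)
  have symA: "\<And>x y t. x \<in> X \<Longrightarrow> t \<in> A x y \<Longrightarrow> t \<in> A y x"
  proof -
    fix x y t assume x: "x \<in> X" and "t \<in> A x y"
    then obtain a p where a: "a \<in> G" "S a p t" "act a x = y" by (auto simp: A_def)
    have "S (inv a) p t" unfolding S_def
    proof (intro allI impI)
      fix r assume "inv a r \<noteq> r"
      then have "a r \<noteq> r" using hp_basic(4)[OF G1[OF a(1)], of r] by auto
      then show "p < r \<and> r < t" using a(2) by (simp add: S_def)
    qed
    moreover have "act (inv a) y = x" using ai[OF a(1) x] a(3) by simp
    ultimately show "t \<in> A y x" using Gi[OF a(1)] by (auto simp: A_def)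
  qed
  have conjA: "\<And>h x y t. h \<in> G \<Longrightarrow> x \<in> X \<Longrightarrow> t \<in> A x y \<Longrightarrow> h t \<in> A (act h x) (act h y)"
  proof -
    fix h x y t assume h: "h \<in> G" and x: "x \<in> X" and "t \<in> A x y"
    then obtain a p where a: "a \<in> G" "S a p t" "act a x = y" by (auto simp: A_def)
    note hb = hp_basic[OF G1[OF h]]
    have "S (h \<circ> a \<circ> inv h) (h p) (h t)" unfolding S_def
    proof (intro allI impI)
      fix r assume "(h \<circ> a \<circ> inv h) r \<noteq> r"
      then have "a (inv h r) \<noteq> inv h r" using hb(5)[of r] by auto
      then have "p < inv h r \<and> inv h r < t" using a(2) by (simp add: S_def)
      then have "h p < h (inv h r) \<and> h (inv h r) < h t" using strict_mono_less[OF hb(1)] by blast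
      then show "h p < r \<and> r < h t" using hb(5)[of r] by simp
    qed
    moreover have "act (h \<circ> a \<circ> inv h) (act h x) = act h y"
    proof -
      have hx: "act h x \<in> X" using aX[OF h x] .
      have "act (h \<circ> (a \<circ> inv h)) (act h x) = act h (act (a \<circ> inv h) (act h x))"
        using ac[OF h Gc[OF a(1) Gi[OF h]] hx] .
      also have "act (a \<circ> inv h) (act h x) = act a (act (inv h) (act h x))"
        using ac[OF a(1) Gi[OF h] hx] .
      also have "\<dots> = y" using ai[OF h x] a(3) by simp
      finally show ?thesis by (simp only: comp_assoc)
    qed
    moreover have "h \<circ> a \<circ> inv h \<in> G" using Gc[OF h Gc[OF a(1) Gi[OF h]]] by (simp add: comp_assoc)
    ultimately show "h t \<in> A (act h x) (act h y)" by (auto simp: A_def)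
  qed
  have conjA_iff: "\<And>h x y t. h \<in> G \<Longrightarrow> x \<in> X \<Longrightarrow> y \<in> X \<Longrightarrow> t \<in> A x y \<longleftrightarrow> h t \<in> A (act h x) (act h y)"
  proof
    fix h x y t assume h: "h \<in> G" and x: "x \<in> X" and y: "y \<in> X"
    show "t \<in> A x y \<Longrightarrow> h t \<in> A (act h x) (act h y)" using conjA[OF h x] .
    assume "h t \<in> A (act h x) (act h y)"
    from conjA[OF Gi[OF h] aX[OF h x] this] show "t \<in> A x y"
      using ai[OF h x] ai[OF h y] hp_basic(4)[OF G1[OF h]] by simp
  qed
  have chainA: "\<And>x y u v. A x y \<subseteq> A u v \<or> A u v \<subseteq> A x y"
  proof (rule ccontr)
    fix x y u v assume "\<not> (A x y \<subseteq> A u v \<or> A u v \<subseteq> A x y)"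
    then obtain p q where "p \<in> A x y" "p \<notin> A u v" "q \<in> A u v" "q \<notin> A x y" by blast
    then show False using upA[of p x y q] upA[of q u v p] by linarith
  qed
  have tri: "\<And>x y z. x \<in> X \<Longrightarrow> y \<in> X \<Longrightarrow> z \<in> X \<Longrightarrow> x \<noteq> y \<Longrightarrow> y \<noteq> z \<Longrightarrow> x \<noteq> z \<Longrightarrow> A x y = A y z"
  proof -
    fix x y z assume xyz: "x \<in> X" "y \<in> X" "z \<in> X" "x \<noteq> y" "y \<noteq> z" "x \<noteq> z"
    obtain h where h: "h \<in> G" "act h x = y" "act h y = z" "act h z = x"
      using cyclic[OF assms(6) k3 xyz] by blast
    have i1: "\<And>t. t \<in> A x y \<longleftrightarrow> h t \<in> A y z" using conjA_iff[OF h(1) xyz(1) xyz(2)] h(2,3) by simp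
    have i2: "\<And>t. t \<in> A y z \<longleftrightarrow> h t \<in> A z x" using conjA_iff[OF h(1) xyz(2) xyz(3)] h(3,4) by simp
    have i3: "\<And>t. t \<in> A z x \<longleftrightarrow> h t \<in> A x y" using conjA_iff[OF h(1) xyz(3) xyz(1)] h(4,2) by simp
    show "A x y = A y z" using cyc3[OF i1 i2 i3 hp_basic(3)[OF G1[OF h(1)]] chainA] .
  qed
  have symE: "\<And>x y. x \<in> X \<Longrightarrow> y \<in> X \<Longrightarrow> A x y = A y x" using symA by blast
  have key: "\<And>x y z. x \<in> X \<Longrightarrow> y \<in> X \<Longrightarrow> z \<in> X \<Longrightarrow> x \<noteq> y \<Longrightarrow> y \<noteq> z \<Longrightarrow> x \<noteq> z \<Longrightarrow> A x y = A x z"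
  proof -
    fix x y z assume xyz: "x \<in> X" "y \<in> X" "z \<in> X" "x \<noteq> y" "y \<noteq> z" "x \<noteq> z"
    have "A z x = A x y" using tri[of z x y] xyz by auto
    then show "A x y = A x z" using symE xyz by auto
  qed
  define P where "P = A x0 y0"
  have const: "\<And>x y. x \<in> X \<Longrightarrow> y \<in> X \<Longrightarrow> x \<noteq> y \<Longrightarrow> A x y = P"
  proof -
    have gen: "\<And>x y u v. x \<in> X \<Longrightarrow> y \<in> X \<Longrightarrow> u \<in> X \<Longrightarrow> v \<in> X \<Longrightarrow> x \<noteq> y \<Longrightarrow> u \<noteq> v \<Longrightarrow> A x y = A u v"
    proof -
      fix x y u v assume h: "x \<in> X" "y \<in> X" "u \<in> X" "v \<in> X" "x \<noteq> y" "u \<noteq> v"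
      show "A x y = A u v"
      proof (cases "u = x")
        case True
        then show ?thesis using key[of x y v] h by (cases "v = y") auto
      next
        case False
        have 1: "A x y = A x u" using key[of x y u] h False by (cases "u = y") auto
        have 2: "A x u = A u x" using symE h by auto
        have 3: "A u x = A u v" using key[of u x v] h False by (cases "v = x") auto
        show ?thesis using 1 2 3 by simp
      qed
    qed
    fix x y assume xy: "x \<in> X" "y \<in> X" "x \<noteq> y"
    show "A x y = P" unfolding P_def using gen[OF xy(1,2) x0y0(1,2) xy(3) x0y0(3)] .
  qed
  have inv_act_inj: "\<And>h x y. h \<in> G \<Longrightarrow> x \<in> X \<Longrightarrow> y \<in> X \<Longrightarrow> x \<noteq> y \<Longrightarrow> act h x \<noteq> act h y"
  proof -
    fix h x y assume h: "h \<in> G" and x: "x \<in> X" and y: "y \<in> X" and ne: "x \<noteq> y"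
    show "act h x \<noteq> act h y"
    proof
      assume e: "act h x = act h y"
      have "x = act (inv h) (act h x)" using ai[OF h x] by simp
      also have "\<dots> = act (inv h) (act h y)" using e by simp
      also have "\<dots> = y" using ai[OF h y] by simp
      finally show False using ne by simp
    qed
  qed
  have Pinv: "\<And>h t. h \<in> G \<Longrightarrow> t \<in> P \<longleftrightarrow> h t \<in> P"
  proof -
    fix h t assume h: "h \<in> G"
    have "t \<in> A x0 y0 \<longleftrightarrow> h t \<in> A (act h x0) (act h y0)" using conjA_iff[OF h x0y0(1,2)] .
    moreover have "A (act h x0) (act h y0) = P"
      using const[OF aX[OF h x0y0(1)] aX[OF h x0y0(2)] inv_act_inj[OF h x0y0]] .
    ultimately show "t \<in> P \<longleftrightarrow> h t \<in> P" by (simp add: P_def)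
  qed
  have Pne: "P \<noteq> {}"
  proof -
    obtain g0 where g0: "g0 \<in> G" "g0 \<noteq> id" "compactly_supported g0" using assms(3) by blast
    have "bounded {x. g0 x \<noteq> x}"
      using g0(3) unfolding compactly_supported_def
      by (meson bounded_subset closure_subset compact_imp_bounded)
    then obtain B where B: "\<And>r. g0 r \<noteq> r \<Longrightarrow> \<bar>r\<bar> \<le> B" unfolding bounded_real by blast
    have "S g0 (- B - 1) (B + 1)" unfolding S_def
    proof (intro allI impI)
      fix r assume "g0 r \<noteq> r"
      then have "\<bar>r\<bar> \<le> B" by (rule B)
      then show "- B - 1 < r \<and> r < B + 1" by linarith
    qed
    obtain x1 where x1: "x1 \<in> X" "act g0 x1 \<noteq> x1" using faith[OF g0(1)] g0(2) by blast
    then have "B + 1 \<in> A x1 (act g0 x1)" using g0(1) \<open>S g0 (- B - 1) (B + 1)\<close> by (auto simp: A_def)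
    then show ?thesis using const[OF x1(1) aX[OF g0(1) x1(1)]] x1(2) by auto
  qed
  have PU: "P = UNIV"
  proof (rule ccontr)
    assume "P \<noteq> UNIV"
    then obtain t1 where t1: "t1 \<notin> P" by blast
    have lb: "\<And>s. s \<in> P \<Longrightarrow> t1 \<le> s"
    proof (rule ccontr)
      fix s assume "s \<in> P" "\<not> t1 \<le> s"
      then show False using upA[of s x0 y0 t1] t1 by (auto simp: P_def)
    qed
    then have bdd: "bdd_below P" by (auto simp: bdd_below_def)
    define \<tau> where "\<tau> = Inf P"
    have le: "\<And>h. h \<in> G \<Longrightarrow> h \<tau> \<le> \<tau>"
    proof -
      fix h assume h: "h \<in> G"
      note hb = hp_basic[OF G1[OF h]]
      show "h \<tau> \<le> \<tau>" unfolding \<tau>_def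
      proof (rule cInf_greatest[OF Pne])
        fix s assume s: "s \<in> P"
        then have "inv h s \<in> P" using Pinv[OF h, of "inv h s"] hb(5) by simp
        then have "Inf P \<le> inv h s" using bdd by (simp add: cInf_lower)
        then have "h (Inf P) \<le> h (inv h s)" using hb(1) by (simp add: strict_mono_less_eq)
        then show "h (Inf P) \<le> s" using hb(5) by simp
      qed
    qed
    obtain g where g: "g \<in> G" "g \<tau> \<noteq> \<tau>" using assms(2) by blast
    note gb = hp_basic[OF G1[OF g(1)]]
    have "inv g \<tau> \<le> \<tau>" using le[OF Gi[OF g(1)]] .
    then have "g (inv g \<tau>) \<le> g \<tau>" using gb(1) by (simp add: strict_mono_less_eq)
    then have "\<tau> \<le> g \<tau>" using gb(5) by simp
    then show False using le[OF g(1)] g(2) by simp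
  qed
  have allA: "\<And>x y t. x \<in> X \<Longrightarrow> y \<in> X \<Longrightarrow> x \<noteq> y \<Longrightarrow> t \<in> A x y" using const PU by blast
  obtain m1 p1 where m1: "m1 \<in> G" "S m1 p1 0" "act m1 x0 = y0"
    using allA[OF x0y0, of 0] by (auto simp: A_def)
  obtain m2 p2 where m2: "m2 \<in> G" "S m2 p2 p1" "act m2 x0 = y0"
    using allA[OF x0y0, of p1] by (auto simp: A_def)
  note b1 = hp_basic[OF G1[OF m1(1)]] and b2 = hp_basic[OF G1[OF m2(1)]]
  define c where "c = inv m1 \<circ> m2"
  have cG: "c \<in> G" unfolding c_def using Gc[OF Gi[OF m1(1)] m2(1)] .
  have cinj: "inj c" using G1[OF cG] hp_basic(2) by blast
  have csupp: "\<And>r. c r \<noteq> r \<Longrightarrow> p2 < r"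
  proof -
    fix r assume cr: "c r \<noteq> r"
    show "p2 < r"
    proof (cases "m2 r = r")
      case True
      then have "m1 r \<noteq> r" using cr b1(4)[of r] by (auto simp: c_def)
      then have "p1 < r" using m1(2) by (simp add: S_def)
      moreover have "p2 < p1"
        proof -
          have "m2 \<noteq> id" using m2(3) aid x0y0 by auto
          then obtain r' where "m2 r' \<noteq> r'" by (auto simp: fun_eq_iff)
          then have "p2 < r' \<and> r' < p1" using m2(2) by (simp add: S_def)
          then show ?thesis by simp
        qed
      ultimately show ?thesis by simp
    next
      case False
      then show ?thesis using m2(2) by (simp add: S_def)
    qed
  qed
  have cx0: "act c x0 = x0"
    unfolding c_def using ac[OF Gi[OF m1(1)] m2(1) x0y0(1)] m2(3) ai[OF m1(1) x0y0(1)] m1(3) by simp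
  have cfix: "\<forall>z\<in>X. act c z = z"
  proof
    fix z assume z: "z \<in> X"
    show "act c z = z"
    proof (cases "z = x0")
      case True then show ?thesis using cx0 by simp
    next
      case False
      obtain n q where n: "n \<in> G" "S n q p2" "act n x0 = z"
        using allA[OF x0y0(1) z, of p2] False by (auto simp: A_def)
      have nsupp: "\<And>r. n r \<noteq> r \<Longrightarrow> r < p2" using n(2) by (simp add: S_def)
      have comm: "c \<circ> n = n \<circ> c"
        by (rule comm_disj[OF cinj hp_basic(2)[OF G1[OF n(1)]] csupp nsupp])
      have "act c z = act (c \<circ> n) x0" using ac[OF cG n(1) x0y0(1)] n(3) by simp
      also have "\<dots> = act (n \<circ> c) x0" using comm by simp
      also have "\<dots> = z" using ac[OF n(1) cG x0y0(1)] cx0 n(3) by simp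
      finally show ?thesis .
    qed
  qed
  have "c = id" using faith[OF cG cfix] .
  have mm: "m2 r = m1 r" for r
  proof -
    have "inv m1 (m2 r) = r" using \<open>c = id\<close> unfolding c_def by (simp add: fun_eq_iff)
    then have "m1 (inv m1 (m2 r)) = m1 r" by simp
    then show ?thesis using b1(5) by simp
  qed
  have "m1 r = r" for r
  proof (rule ccontr)
    assume ne: "m1 r \<noteq> r"
    then have "p1 < r" using m1(2) by (simp add: S_def)
    moreover have "r < p1" using ne mm[of r] m2(2) by (simp add: S_def)
    ultimately show False by simp
  qed
  then have "m1 = id" by (simp add: fun_eq_iff)
  then show False using m1(3) aid x0y0 by simp
qed

end
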